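(* Let $n\ge3$. There is no weight-preserving bijection $\Phi$ from the set of arrowed monotone triangles with bottom row $(1,\dots,n)$ to the set of SBCSPPs of order $n$ such that the map sending each DPP-SBCSPP $D$ to the monotone triangle obtained from $\Phi^{-1}(D)$ by forgetting all decorations is a bijection from the set of DPP-SBCSPPs of order $n$ onto the set of monotone triangles with bottom row $(1,\dots,n)$.
   Context: A monotone triangle with $n$ rows is an array $(m_{i,j})_{1\le j\le i\le n}$ of integers with $m_{i+1,j}\le m_{i,j}\le m_{i+1,j+1}$, $m_{i,j}<m_{i,j+1}$; row $n$ is the bottom row; northwest/northeast-neighbours of $m_{i,j}$ are $m_{i-1,j-1}$, $m_{i-1,j}$. An arrowed monotone triangle decorates each entry by one of $\nwarrow,\nearrow,\nwarrow\!\nearrow$ with: an entry equal to its northwest-neighbour carries $\nearrow$; an entry equal to its northeast-neighbour carries $\nwarrow$. Weight: $u^{\#\nearrow}v^{\#\nwarrow}w^{\#\nwarrow\nearrow}\prod_i X_i^{(\text{sum of row } i)-(\text{sum of row } i-1)+(\#\nearrow\text{ in row }i)-(\#\nwarrow\text{ in row }i)}$. A near-balanced partition $(a_1,\dots,a_l\mid b_1,\dots,b_l)$ (Frobenius notation) has $a_i\in\{b_i,b_i+1\}$; $\mathrm{W}(\lambda)=w^{l+\sum(b_i-a_i)}$. An SBCSPP of order $n$ is a filling of a near-balanced shape with nonempty subsets of $\{1,\dots,n\}$, singletons strictly above the diagonal, row maxima weakly decreasing left to right, and columns strictly decreasing (all elements of an upper cell exceed all elements of the cell below). Weight: $\mathrm{W}(\lambda)\,u^{\#\text{cells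 strictly above diagonal}}\,v^{\binom{n+1}{2}-\#\text{entries on/below diagonal}}\,w^{\#\text{entries}-\#\text{cells}}\prod_iX_i^{\#\,i\text{'s}}$. A DPP-SBCSPP is an SBCSPP in which every cell is a singleton, the shape satisfies $a_i=b_i+1$ for all $i$, below each diagonal entry $d$ the entries in its column are $d-1,d-2,\dots,1$ (so that column has exactly $d-1$ cells below the diagonal), and no $1$ appears strictly above the diagonal. A bijection is weight-preserving if it maps each object to one of the same weight. *)

theory Defs
  imports Main
begin

text \<open>A monotone triangle with n rows is a function m with m i j the entry in
row i, position j, for 1 <= j <= i <= n; entries outside this index region are
normalised to 0 so that triangles are determined extensionally.\<close>

definition tri_idx :: "nat \<Rightarrow> (nat \<times> nat) set" where
  "tri_idx n = {(i, j). 1 \<le> j \<and> j \<le> i \<and> i \<le> n}"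

definition monotone_triangle :: "nat \<Rightarrow> (nat \<Rightarrow> nat \<Rightarrow> int) \<Rightarrow> bool" where
  "monotone_triangle n m \<longleftrightarrow>
     (\<forall>i j. (i, j) \<notin> tri_idx n \<longrightarrow> m i j = 0) \<and>
     (\<forall>i j. (i, j) \<in> tri_idx n \<and> i < n \<longrightarrow> m (i+1) j \<le> m i j \<and> m i j \<le> m (i+1) (j+1)) \<and>
     (\<forall>i j. (i, j) \<in> tri_idx n \<and> j < i \<longrightarrow> m i j < m i (j+1))"

definition MT :: "nat \<Rightarrow> (nat \<Rightarrow> nat \<Rightarrow> int) set" where
  "MT n = {m. monotone_triangle n m \<and> (\<forall>j\<in>{1..n}. m n j = int j)}"

datatype arrow = NW | NE | NWNE

text \<open>Northwest neighbour of m i j is m (i-1) (j-1), northeast is m (i-1) j.\<close>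
definition AMT :: "nat \<Rightarrow> ((nat \<Rightarrow> nat \<Rightarrow> int) \<times> (nat \<Rightarrow> nat \<Rightarrow> arrow)) set" where
  "AMT n = {(m, d). m \<in> MT n \<and>
     (\<forall>i j. (i, j) \<notin> tri_idx n \<longrightarrow> d i j = NWNE) \<and>
     (\<forall>i j. (i, j) \<in> tri_idx n \<longrightarrow>
        (2 \<le> j \<and> m i j = m (i-1) (j-1) \<longrightarrow> d i j = NE) \<and>
        (j < i \<and> m i j = m (i-1) j \<longrightarrow> d i j = NW))}"

text \<open>Weights are Laurent monomials in u, v, w, X_1, ..., X_n; we represent
them by their exponent vectors (exp u, exp v, exp w, i |-> exp X_i), with the
X-exponent set to 0 outside {1..n}.\<close>
type_synonym wt = "int \<times> int \<times> int \<times> (nat \<Rightarrow> int)"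

definition amt_weight :: "nat \<Rightarrow> (nat \<Rightarrow> nat \<Rightarrow> int) \<times> (nat \<Rightarrow> nat \<Rightarrow> arrow) \<Rightarrow> wt" where
  "amt_weight n t = (case t of (m, d) \<Rightarrow>
     (int (card {(i, j) \<in> tri_idx n. d i j = NE}),
      int (card {(i, j) \<in> tri_idx n. d i j = NW}),
      int (card {(i, j) \<in> tri_idx n. d i j = NWNE}),
      (\<lambda>i. if 1 \<le> i \<and> i \<le> n then
              (\<Sum>j=1..i. m i j) - (\<Sum>j=1..i-1. m (i-1) j)
              + int (card {j \<in> {1..i}. d i j = NE}) - int (card {j \<in> {1..i}. d i j = NW})
            else 0)))"

text \<open>A filling is a function F from cells (row r, column c), 1-based, to sets of
integers; the shape is the set of cells with nonempty entry (all other cells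
carry the empty set).\<close>

definition supp :: "(nat \<times> nat \<Rightarrow> nat set) \<Rightarrow> (nat \<times> nat) set" where
  "supp F = {p. F p \<noteq> {}}"

definition row_len :: "(nat \<times> nat \<Rightarrow> nat set) \<Rightarrow> nat \<Rightarrow> nat" where
  "row_len F r = card {c. F (r, c) \<noteq> {}}"

definition col_len :: "(nat \<times> nat \<Rightarrow> nat set) \<Rightarrow> nat \<Rightarrow> nat" where
  "col_len F c = card {r. F (r, c) \<noteq> {}}"

definition durfee :: "(nat \<times> nat \<Rightarrow> nat set) \<Rightarrow> nat" where
  "durfee F = card {i. F (i, i) \<noteq> {}}"

definition frob_a :: "(nat \<times> nat \<Rightarrow> nat set) \<Rightarrow> nat \<Rightarrow> int" where
  "frob_a F i = int (row_len F i) - int i"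

definition frob_b :: "(nat \<times> nat \<Rightarrow> nat set) \<Rightarrow> nat \<Rightarrow> int" where
  "frob_b F i = int (col_len F i) - int i"

definition young_shape :: "(nat \<times> nat \<Rightarrow> nat set) \<Rightarrow> bool" where
  "young_shape F \<longleftrightarrow> finite (supp F) \<and>
     (\<forall>r c. F (r, c) \<noteq> {} \<longrightarrow> 1 \<le> r \<and> 1 \<le> c) \<and>
     (\<forall>r c r' c'. F (r, c) \<noteq> {} \<and> 1 \<le> r' \<and> r' \<le> r \<and> 1 \<le> c' \<and> c' \<le> c \<longrightarrow> F (r', c') \<noteq> {})"

definition near_balanced :: "(nat \<times> nat \<Rightarrow> nat set) \<Rightarrow> bool" where
  "near_balanced F \<longleftrightarrow> young_shape F \<and>
     (\<forall>i\<in>{1..durfee F}. frob_a F i = frob_b F i \<or> frob_a F i = frob_b F i + 1)"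

definition sbcspp :: "nat \<Rightarrow> (nat \<times> nat \<Rightarrow> nat set) \<Rightarrow> bool" where
  "sbcspp n F \<longleftrightarrow> near_balanced F \<and>
     (\<forall>p. F p \<subseteq> {1..n}) \<and>
     (\<forall>r c. r < c \<and> F (r, c) \<noteq> {} \<longrightarrow> card (F (r, c)) = 1) \<and>
     (\<forall>r c. 1 \<le> c \<and> F (r, c+1) \<noteq> {} \<longrightarrow> Max (F (r, c+1)) \<le> Max (F (r, c))) \<and>
     (\<forall>r c. 1 \<le> r \<and> F (r+1, c) \<noteq> {} \<longrightarrow> (\<forall>x\<in>F (r, c). \<forall>y\<in>F (r+1, c). y < x))"

definition SBCSPP :: "nat \<Rightarrow> (nat \<times> nat \<Rightarrow> nat set) set" where
  "SBCSPP n = {F. sbcspp n F}"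

definition weight_W :: "(nat \<times> nat \<Rightarrow> nat set) \<Rightarrow> int" where
  "weight_W F = int (durfee F) + (\<Sum>i=1..durfee F. frob_b F i - frob_a F i)"

definition sbc_weight :: "nat \<Rightarrow> (nat \<times> nat \<Rightarrow> nat set) \<Rightarrow> wt" where
  "sbc_weight n F =
     (int (card {(r, c) \<in> supp F. r < c}),
      int ((n + 1) choose 2) - (\<Sum>p\<in>{(r, c) \<in> supp F. c \<le> r}. int (card (F p))),
      weight_W F + (\<Sum>p\<in>supp F. int (card (F p))) - int (card (supp F)),
      (\<lambda>i. if 1 \<le> i \<and> i \<le> n then int (card {p. i \<in> F p}) else 0))"

definition dpp_sbcspp :: "nat \<Rightarrow> (nat \<times> nat \<Rightarrow> nat set) \<Rightarrow> bool" where
  "dpp_sbcspp n F \<longleftrightarrow> sbcspp n F \<and>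
     (\<forall>p\<in>supp F. card (F p) = 1) \<and>
     (\<forall>i\<in>{1..durfee F}. frob_a F i = frob_b F i + 1) \<and>
     (\<forall>i d. F (i, i) = {d} \<longrightarrow>
        (\<forall>k. 1 \<le> k \<longrightarrow> (if k < d then F (i+k, i) = {d - k} else F (i+k, i) = {}))) \<and>
     (\<forall>r c. r < c \<longrightarrow> 1 \<notin> F (r, c))"

definition DPP :: "nat \<Rightarrow> (nat \<times> nat \<Rightarrow> nat set) set" where
  "DPP n = {F. dpp_sbcspp n F}"

end

theory Submission
  imports Defs
begin

lemma downclosed_interval:
  assumes fS: "finite S" and z: "0 \<notin> S" and dc: "\<And>c c'. c \<in> S \<Longrightarrow> 1 \<le> c' \<Longrightarrow> c' \<le> c \<Longrightarrow> c' \<in> S"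
  shows "S = {1..card S}"
proof (cases "S = {}")
  case True then show ?thesis by simp
next
  case False
  define m where "m = Max S"
  have mS: "m \<in> S" using False fS m_def by simp
  have "S = {1..m}"
  proof
    show "S \<subseteq> {1..m}"
    proof
      fix x assume x: "x \<in> S"
      have "x \<le> m" unfolding m_def using fS x by (rule Max_ge)
      moreover have "x \<noteq> 0" using x z by metis
      ultimately show "x \<in> {1..m}" by simp
    qed
    show "{1..m} \<subseteq> S"
    proof
      fix x assume "x \<in> {1..m}"
      then show "x \<in> S" using dc[OF mS, of x] by simp
    qed
  qed
  then show ?thesis by simp
qed

lemma downclosed_mem:
  assumes "finite S" "0 \<notin> S" "\<And>c c'. c \<in> S \<Longrightarrow> 1 \<le> c' \<Longrightarrow> c' \<le> c \<Longrightarrow> c' \<in> S"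
    "1 \<le> k" "k \<le> card S"
  shows "k \<in> S"
proof -
  have "S = {1..card S}" by (rule downclosed_interval[OF assms(1,2)], rule assms(3))
  moreover have "k \<in> {1..card S}" using assms(4,5) by simp
  ultimately show ?thesis by (metis (no_types))
qed

lemma supp_finite_fst: "finite (supp F) \<Longrightarrow> finite {c. F (r, c) \<noteq> {}}"
proof -
  assume f: "finite (supp F)"
  have "{c. F (r, c) \<noteq> {}} \<subseteq> snd ` supp F" by (force simp: supp_def image_iff)
  then show ?thesis using f finite_surj by blast
qed

lemma supp_finite_snd: "finite (supp F) \<Longrightarrow> finite {r. F (r, c) \<noteq> {}}"
proof -
  assume f: "finite (supp F)"
  have "{r. F (r, c) \<noteq> {}} \<subseteq> fst ` supp F" by (force simp: supp_def image_iff)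
  then show ?thesis using f finite_surj by blast
qed

lemma supp_finite_diag: "finite (supp F) \<Longrightarrow> finite {i. F (i, i) \<noteq> {}}"
proof -
  assume f: "finite (supp F)"
  have "{i. F (i, i) \<noteq> {}} \<subseteq> fst ` supp F" by (force simp: supp_def image_iff)
  then show ?thesis using f finite_surj by blast
qed

lemma young_nonempty_pos:
  assumes "young_shape F" "F (r, c) \<noteq> {}" shows "1 \<le> r" "1 \<le> c"
proof -
  have "\<forall>r c. F (r, c) \<noteq> {} \<longrightarrow> 1 \<le> r \<and> 1 \<le> c"
    using assms(1) unfolding young_shape_def by (elim conjE)
  then show "1 \<le> r" "1 \<le> c" using assms(2) by auto
qed

lemma young_down:
  assumes "young_shape F" "F (r, c) \<noteq> {}" "1 \<le> r'" "r' \<le> r" "1 \<le> c'" "c' \<le> c"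
  shows "F (r', c') \<noteq> {}"
proof -
  have "\<forall>r c r' c'. F (r, c) \<noteq> {} \<and> 1 \<le> r' \<and> r' \<le> r \<and> 1 \<le> c' \<and> c' \<le> c \<longrightarrow> F (r', c') \<noteq> {}"
    using assms(1) unfolding young_shape_def by (elim conjE)
  then show ?thesis using assms(2-) by blast
qed

lemma sbcspp_young: "sbcspp n F \<Longrightarrow> young_shape F"
  unfolding sbcspp_def near_balanced_def by (elim conjE)

lemma col_cond:
  assumes "sbcspp n F" "1 \<le> r" "F (r+1, c) \<noteq> {}" "x \<in> F (r, c)" "y \<in> F (r+1, c)"
  shows "y < x"
proof -
  have "\<forall>r c. 1 \<le> r \<and> F (r+1, c) \<noteq> {} \<longrightarrow> (\<forall>x\<in>F (r, c). \<forall>y\<in>F (r+1, c). y < x)"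
    using assms(1) unfolding sbcspp_def by (elim conjE)
  then show ?thesis using assms(2-) by blast
qed

lemma row_cond:
  assumes "sbcspp n F" "1 \<le> c" "F (r, c+1) \<noteq> {}"
  shows "Max (F (r, c+1)) \<le> Max (F (r, c))"
proof -
  have "\<forall>r c. 1 \<le> c \<and> F (r, c+1) \<noteq> {} \<longrightarrow> Max (F (r, c+1)) \<le> Max (F (r, c))"
    using assms(1) unfolding sbcspp_def by (elim conjE)
  then show ?thesis using assms(2-) by blast
qed

lemma sbc_range: "sbcspp n F \<Longrightarrow> F p \<subseteq> {1..n}"
  unfolding sbcspp_def by (elim conjE) blast

lemma sbc_single: "sbcspp n F \<Longrightarrow> r < c \<Longrightarrow> F (r, c) \<noteq> {} \<Longrightarrow> card (F (r, c)) = 1"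
  unfolding sbcspp_def by (elim conjE) blast

lemma col_strict:
  assumes "sbcspp n F" "1 \<le> r" "F (r + Suc k, c) \<noteq> {}" "x \<in> F (r, c)" "y \<in> F (r + Suc k, c)"
  shows "y < x"
  using assms(3-5)
proof (induction k arbitrary: y)
  case 0
  then show ?case using col_cond[OF assms(1,2), of c x y] by simp
next
  case (Suc k)
  have Y: "young_shape F" using assms(1) by (rule sbcspp_young)
  have "1 \<le> c" using young_nonempty_pos[OF Y Suc.prems(1)] by simp
  then have ne: "F (r + Suc k, c) \<noteq> {}"
    using young_down[OF Y Suc.prems(1), of "r + Suc k" c] assms(2) by simp
  then obtain z where z: "z \<in> F (r + Suc k, c)" by blast
  have "z < x" using Suc.IH[OF ne Suc.prems(2) z] .
  moreover have "y < z"
    using col_cond[OF assms(1), of "r + Suc k" c z y] Suc.prems z assms(2) by simp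
  ultimately show ?case by simp
qed

lemma one_col_unique:
  assumes S: "sbcspp n F" and f1: "1 \<in> F (r, c)" "1 \<in> F (r', c)"
  shows "r = r'"
proof (rule ccontr)
  have Y: "young_shape F" using S by (rule sbcspp_young)
  have r1: "1 \<le> r" using young_nonempty_pos(1)[OF Y, of r c] f1(1) by blast
  have r2: "1 \<le> r'" using young_nonempty_pos(1)[OF Y, of r' c] f1(2) by blast
  assume "r \<noteq> r'"
  then have "r < r' \<or> r' < r" by (rule linorder_neq_iff[THEN iffD1])
  then show False
  proof
    assume "r < r'"
    then obtain k where k0: "r' = Suc (r + k)" using less_imp_Suc_add by blast
    then have k: "r' = r + Suc k" by simp
    have a: "F (r + Suc k, c) \<noteq> {}" "1 \<in> F (r + Suc k, c)" using f1(2) k by auto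
    have "(1::nat) < 1" by (rule col_strict[OF S r1 a(1) f1(1) a(2)])
    then show False by simp
  next
    assume "r' < r"
    then obtain k where k0: "r = Suc (r' + k)" using less_imp_Suc_add by blast
    then have k: "r = r' + Suc k" by simp
    have a: "F (r' + Suc k, c) \<noteq> {}" "1 \<in> F (r' + Suc k, c)" using f1(1) k by auto
    have "(1::nat) < 1" by (rule col_strict[OF S r2 a(1) f1(2) a(2)])
    then show False by simp
  qed
qed

lemma ones_le_durfee:
  assumes D: "dpp_sbcspp n F"
  shows "card {p. 1 \<in> F p} \<le> durfee F"
proof -
  have S: "sbcspp n F" using D unfolding dpp_sbcspp_def by (elim conjE)
  have Y: "young_shape F" using S by (rule sbcspp_young)
  have fin: "finite (supp F)" using Y unfolding young_shape_def by (elim conjE)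
  have no1: "\<And>r c. r < c \<Longrightarrow> 1 \<notin> F (r, c)"
  proof -
    have "\<forall>r c. r < c \<longrightarrow> 1 \<notin> F (r, c)" using D unfolding dpp_sbcspp_def by (elim conjE)
    then show "\<And>r c. r < c \<Longrightarrow> 1 \<notin> F (r, c)" by blast
  qed
  have inj: "inj_on snd {p. 1 \<in> F p}"
  proof (rule inj_onI)
    fix p q assume p: "p \<in> {p. 1 \<in> F p}" and q: "q \<in> {p. 1 \<in> F p}" and e: "snd p = snd q"
    obtain r c where pp: "p = (r, c)" by (cases p)
    obtain r' c' where qq: "q = (r', c')" by (cases q)
    have cc: "c' = c" using e pp qq by simp
    have f1: "1 \<in> F (r, c)" "1 \<in> F (r', c)" using p q pp qq cc by simp_all
    have "r = r'" by (rule one_col_unique[OF S f1])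
    then show "p = q" using pp qq cc by simp
  qed
  have sub: "snd ` {p. 1 \<in> F p} \<subseteq> {i. F (i, i) \<noteq> {}}"
  proof
    fix c assume "c \<in> snd ` {p. 1 \<in> F p}"
    then obtain p where p: "1 \<in> F p" "c = snd p" by blast
    obtain r where f: "1 \<in> F (r, c)" using p by (metis prod.collapse)
    have "c \<le> r" using no1 f by (meson not_le)
    moreover have "1 \<le> c" using young_nonempty_pos(2)[OF Y, of r c] f by auto
    moreover have "F (r, c) \<noteq> {}" using f by blast
    ultimately have "F (c, c) \<noteq> {}" using young_down[OF Y, of r c c c] by simp
    then show "c \<in> {i. F (i, i) \<noteq> {}}" by simp
  qed
  show ?thesis unfolding durfee_def
    using card_inj_on_le[OF inj sub supp_finite_diag[OF fin]] .
qed

lemma dpp_conj: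
  assumes D: "dpp_sbcspp n F"
  shows "sbcspp n F \<and> (\<forall>p\<in>supp F. card (F p) = 1) \<and>
    (\<forall>i\<in>{1..durfee F}. frob_a F i = frob_b F i + 1) \<and>
    (\<forall>i d. F (i, i) = {d} \<longrightarrow>
        (\<forall>k. 1 \<le> k \<longrightarrow> (if k < d then F (i+k, i) = {d - k} else F (i+k, i) = {}))) \<and>
    (\<forall>r c. r < c \<longrightarrow> 1 \<notin> F (r, c))"
  using D unfolding dpp_sbcspp_def .

lemmas dpp_facts = dpp_conj[THEN conjunct1] dpp_conj[THEN conjunct2, THEN conjunct1]
  dpp_conj[THEN conjunct2, THEN conjunct2, THEN conjunct1]
  dpp_conj[THEN conjunct2, THEN conjunct2, THEN conjunct2, THEN conjunct1]
  dpp_conj[THEN conjunct2, THEN conjunct2, THEN conjunct2, THEN conjunct2]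

lemma dpp_above_bound:
  assumes D: "dpp_sbcspp n F" and l2: "2 \<le> durfee F"
  shows "2 * durfee F + 1 \<le> card {(r, c) \<in> supp F. r < c}"
proof -
  note DF = dpp_facts[OF D]
  have S: "sbcspp n F" by (rule DF(1))
  have Y: "young_shape F" using S by (rule sbcspp_young)
  have fin: "finite (supp F)" using Y unfolding young_shape_def by (elim conjE)
  define l where "l = durfee F"
  have l2': "2 \<le> l" using l2 l_def by simp
  define L where "L = {i. F (i, i) \<noteq> {}}"
  have lL: "l \<in> L"
  proof (rule downclosed_mem)
    show "finite L" unfolding L_def by (rule supp_finite_diag[OF fin])
    show "0 \<notin> L" unfolding L_def using young_nonempty_pos(1)[OF Y, of 0 0] by auto
    show "c' \<in> L" if "c \<in> L" "1 \<le> c'" "c' \<le> c" for c c'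
    proof -
      have "F (c, c) \<noteq> {}" using that(1) unfolding L_def by simp
      then have "F (c', c') \<noteq> {}" using young_down[OF Y, of c c c' c'] that(2,3) by blast
      then show ?thesis unfolding L_def by simp
    qed
    show "1 \<le> l" using l2' by simp
    show "l \<le> card L" unfolding l_def L_def durfee_def by simp
  qed
  then have dl: "F (l, l) \<noteq> {}" unfolding L_def by simp
  have lrange: "l \<in> {1..durfee F}" using l2' l_def by simp
  have fr: "frob_a F l = frob_b F l + 1" using DF(3) lrange by blast
  then have rl: "row_len F l = col_len F l + 1" unfolding frob_a_def frob_b_def by simp
  define R where "R = {c. F (l, c) \<noteq> {}}"
  define C where "C = {r. F (r, l) \<noteq> {}}"
  have finR: "finite R" unfolding R_def by (rule supp_finite_fst[OF fin])
  have finC: "finite C" unfolding C_def by (rule supp_finite_snd[OF fin])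
  have R0: "0 \<notin> R" unfolding R_def using young_nonempty_pos(2)[OF Y, of l 0] by auto
  have Rdc: "c' \<in> R" if "c \<in> R" "1 \<le> c'" "c' \<le> c" for c c'
    using that young_down[OF Y, of l c l c'] l2' unfolding R_def by simp
  have Csub: "{1..k} \<subseteq> C" if "F (k, l) \<noteq> {}" for k
    using that young_down[OF Y, of k l _ l] l2' unfolding C_def by auto
  have rlR: "row_len F l = card R" unfolding row_len_def R_def by simp
  have clC: "col_len F l = card C" unfolding col_len_def C_def by simp
  have "l \<le> card C" using card_mono[OF finC Csub[OF dl]] by simp
  then have "l + 1 \<le> card R" using rl rlR clC by simp
  then have "l + 1 \<in> R" using downclosed_mem[OF finR R0 Rdc] by simp
  then have ne1: "F (l, l+1) \<noteq> {}" unfolding R_def by simp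
  then have c1: "card (F (l, l+1)) = 1" using sbc_single[OF S] by simp
  then obtain x where x: "F (l, l+1) = {x}" by (rule card_1_singletonE)
  have "x \<noteq> 1" using DF(5) x by auto
  moreover have "x \<in> {1..n}" using sbc_range[OF S, of "(l, l+1)"] x by auto
  ultimately have x2: "2 \<le> x" by simp
  have "card (F (l, l)) = 1" using DF(2) dl unfolding supp_def by simp
  then obtain dd where dd: "F (l, l) = {dd}" by (rule card_1_singletonE)
  have "Max (F (l, l+1)) \<le> Max (F (l, l))" using row_cond[OF S _ ne1] l2' by simp
  then have "x \<le> dd" using x dd by simp
  then have "1 < dd" using x2 by simp
  moreover have "\<forall>k. 1 \<le> k \<longrightarrow> (if k < dd then F (l+k, l) = {dd - k} else F (l+k, l) = {})"
    using DF(4) dd by blast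
  ultimately have "F (l+1, l) = {dd - 1}" by (metis le_refl)
  then have "{1..l+1} \<subseteq> C" using Csub[of "l+1"] by simp
  then have "card {1..l+1} \<le> card C" by (rule card_mono[OF finC])
  then have "l + 1 \<le> card C" by simp
  then have "l + 2 \<le> card R" using rl rlR clC by simp
  then have "l + 2 \<in> R" using downclosed_mem[OF finR R0 Rdc] by simp
  then have ne2: "F (l, l+2) \<noteq> {}" unfolding R_def by simp
  define A where "A = ({1::nat} \<times> {2..l+2}) \<union> ({2} \<times> {3..l+2})"
  have Asub: "A \<subseteq> {(r, c) \<in> supp F. r < c}"
  proof
    fix p assume "p \<in> A"
    then obtain r c where p: "p = (r, c)" "r \<in> {1, 2}" "r < c" "c \<le> l + 2" "1 \<le> c"
      unfolding A_def by auto
    have "1 \<le> r" "r \<le> l" using p(2) l2' by auto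
    then have "F (r, c) \<noteq> {}" using young_down[OF Y ne2, of r c] p by simp
    then show "p \<in> {(r, c) \<in> supp F. r < c}" using p unfolding supp_def by simp
  qed
  have cA: "card A = 2 * l + 1"
  proof -
    have "card A = card ({1::nat} \<times> {2..l+2}) + card ({2::nat} \<times> {3..l+2})"
      unfolding A_def by (rule card_Un_disjoint) auto
    also have "\<dots> = 2 * l + 1" by simp
    finally show ?thesis .
  qed
  have "finite {(r, c) \<in> supp F. r < c}" using fin by (rule finite_subset[rotated]) auto
  then have "card A \<le> card {(r, c) \<in> supp F. r < c}" using card_mono Asub by blast
  then show ?thesis using cA l_def by simp
qed

definition Rn :: "nat \<Rightarrow> nat \<Rightarrow> nat \<Rightarrow> int" where
  "Rn n i j = (if (i, j) \<in> tri_idx n then (if j = i then int n else int j) else 0)"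

lemma Rn_MT:
  assumes n: "1 \<le> n"
  shows "Rn n \<in> MT n"
proof -
  have a: "\<forall>i j. (i, j) \<notin> tri_idx n \<longrightarrow> Rn n i j = 0" unfolding Rn_def by simp
  have b: "\<forall>i j. (i, j) \<in> tri_idx n \<and> i < n \<longrightarrow> Rn n (i+1) j \<le> Rn n i j \<and> Rn n i j \<le> Rn n (i+1) (j+1)"
    unfolding Rn_def tri_idx_def by auto
  have c: "\<forall>i j. (i, j) \<in> tri_idx n \<and> j < i \<longrightarrow> Rn n i j < Rn n i (j+1)"
    unfolding Rn_def tri_idx_def by auto
  have d: "\<forall>j\<in>{1..n}. Rn n n j = int j" unfolding Rn_def tri_idx_def by auto
  show ?thesis unfolding MT_def monotone_triangle_def using a b c d by blast
qed

lemma AMT_NE_bound: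
  assumes t: "(Rn n, d) \<in> AMT n" and n: "1 \<le> n"
  shows "card {(i, j) \<in> tri_idx n. d i j = NE} \<le> 2 * n - 1"
    "d 1 1 \<noteq> NE \<Longrightarrow> card {(i, j) \<in> tri_idx n. d i j = NE} \<le> 2 * n - 2"
proof -
  have cond: "\<forall>i j. (i, j) \<in> tri_idx n \<longrightarrow> (j < i \<and> Rn n i j = Rn n (i-1) j \<longrightarrow> d i j = NW)"
    using t unfolding AMT_def by blast
  define S where "S = (\<lambda>i. (i, i)) ` {1..n} \<union> (\<lambda>i. (i, i - 1)) ` {2..n}"
  have sub: "{(i, j) \<in> tri_idx n. d i j = NE} \<subseteq> S"
  proof
    fix p assume p: "p \<in> {(i, j) \<in> tri_idx n. d i j = NE}"
    obtain i j where pp: "p = (i, j)" by (cases p)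
    have ij: "(i, j) \<in> tri_idx n" "d i j = NE" using p pp by auto
    have r: "1 \<le> j" "j \<le> i" "i \<le> n" using ij(1) unfolding tri_idx_def by auto
    show "p \<in> S"
    proof (cases "j + 1 < i")
      case True
      have "(i - 1, j) \<in> tri_idx n" using r True unfolding tri_idx_def by auto
      then have "Rn n (i-1) j = int j" using True unfolding Rn_def by auto
      moreover have "Rn n i j = int j" using ij(1) True unfolding Rn_def by auto
      ultimately have "d i j = NW" using cond ij(1) True by auto
      then show ?thesis using ij(2) by simp
    next
      case False
      then have "j = i \<or> j = i - 1 \<and> 2 \<le> i" using r by auto
      then show ?thesis unfolding S_def pp using r by auto
    qed
  qed
  have finS: "finite S" unfolding S_def by simp
  have cS: "card S \<le> 2 * n - 1"
  proof -
    have "card S \<le> card ((\<lambda>i. (i, i)) ` {1..n}) + card ((\<lambda>i. (i, i - 1)) ` {2..n})"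
      unfolding S_def by (rule card_Un_le)
    also have "\<dots> \<le> card {1..n} + card {2..n}"
      by (intro add_mono card_image_le) simp_all
    also have "\<dots> = 2 * n - 1" using n by simp
    finally show ?thesis .
  qed
  show "card {(i, j) \<in> tri_idx n. d i j = NE} \<le> 2 * n - 1"
    using card_mono[OF finS sub] cS by simp
  assume d11: "d 1 1 \<noteq> NE"
  have sub2: "{(i, j) \<in> tri_idx n. d i j = NE} \<subseteq> S - {(1, 1)}" using sub d11 by auto
  have "(1, 1) \<in> S" unfolding S_def using n by auto
  then have "card (S - {(1, 1)}) = card S - 1" by (rule card_Diff_singleton)
  then show "card {(i, j) \<in> tri_idx n. d i j = NE} \<le> 2 * n - 2"
    using card_mono[OF _ sub2] finS cS by simp
qed

theorem mainTheorem5: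
  fixes n :: nat
  assumes "n \<ge> 3"
  shows "\<not> (\<exists>\<Phi> :: (nat \<Rightarrow> nat \<Rightarrow> int) \<times> (nat \<Rightarrow> nat \<Rightarrow> arrow) \<Rightarrow> (nat \<times> nat \<Rightarrow> nat set).
            bij_betw \<Phi> (AMT n) (SBCSPP n) \<and>
            (\<forall>t\<in>AMT n. sbc_weight n (\<Phi> t) = amt_weight n t) \<and>
            bij_betw (\<lambda>D. fst (inv_into (AMT n) \<Phi> D)) (DPP n) (MT n))"
proof
  assume "\<exists>\<Phi> :: (nat \<Rightarrow> nat \<Rightarrow> int) \<times> (nat \<Rightarrow> nat \<Rightarrow> arrow) \<Rightarrow> (nat \<times> nat \<Rightarrow> nat set).
            bij_betw \<Phi> (AMT n) (SBCSPP n) \<and>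
            (\<forall>t\<in>AMT n. sbc_weight n (\<Phi> t) = amt_weight n t) \<and>
            bij_betw (\<lambda>D. fst (inv_into (AMT n) \<Phi> D)) (DPP n) (MT n)"
  then obtain \<Phi> :: "(nat \<Rightarrow> nat \<Rightarrow> int) \<times> (nat \<Rightarrow> nat \<Rightarrow> arrow) \<Rightarrow> (nat \<times> nat \<Rightarrow> nat set)"
    where b1: "bij_betw \<Phi> (AMT n) (SBCSPP n)"
      and w: "\<forall>t\<in>AMT n. sbc_weight n (\<Phi> t) = amt_weight n t"
      and b2: "bij_betw (\<lambda>D. fst (inv_into (AMT n) \<Phi> D)) (DPP n) (MT n)"
    by blast
  have n1: "1 \<le> n" using assms by simp
  have "Rn n \<in> MT n" by (rule Rn_MT[OF n1])
  then have "Rn n \<in> (\<lambda>D. fst (inv_into (AMT n) \<Phi> D)) ` DPP n"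
    using b2 unfolding bij_betw_def by simp
  then obtain D where gD0: "Rn n = fst (inv_into (AMT n) \<Phi> D)" and DD: "D \<in> DPP n"
    by (rule imageE)
  have gD: "fst (inv_into (AMT n) \<Phi> D) = Rn n" using gD0 by simp
  have Ddpp: "dpp_sbcspp n D" using DD unfolding DPP_def by simp
  have "sbcspp n D" by (rule dpp_facts(1)[OF Ddpp])
  then have "D \<in> \<Phi> ` AMT n" using b1 unfolding bij_betw_def SBCSPP_def by simp
  then have tA: "inv_into (AMT n) \<Phi> D \<in> AMT n" and tD: "\<Phi> (inv_into (AMT n) \<Phi> D) = D"
    by (rule inv_into_into, rule f_inv_into_f)
  define t where "t = inv_into (AMT n) \<Phi> D"
  obtain d where td: "t = (Rn n, d)" using gD t_def by (metis prod.collapse)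
  have tAMT: "(Rn n, d) \<in> AMT n" using tA td t_def by simp
  have weq: "sbc_weight n D = amt_weight n (Rn n, d)" using w tA tD td t_def by metis
  have u_eq: "int (card {(r, c) \<in> supp D. r < c}) = int (card {(i, j) \<in> tri_idx n. d i j = NE})"
    using arg_cong[OF weq, of fst] unfolding sbc_weight_def amt_weight_def by simp
  have X_eq0: "(snd (snd (snd (sbc_weight n D)))) 1 = (snd (snd (snd (amt_weight n (Rn n, d))))) 1"
    using weq by simp
  have R11: "Rn n 1 1 = int n" unfolding Rn_def tri_idx_def using n1 by simp
  have X_eq: "int (card {p. 1 \<in> D p}) = int n
      + int (card {j \<in> {1..1}. d 1 j = NE}) - int (card {j \<in> {1..1}. d 1 j = NW})"
    using X_eq0 n1 R11 unfolding sbc_weight_def amt_weight_def by simp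
  have cNE: "card {j \<in> {1..1::nat}. d 1 j = NE} = (if d 1 1 = NE then 1 else 0)"
  proof -
    have "{j \<in> {1..1::nat}. d 1 j = NE} = (if d 1 1 = NE then {1} else {})" by auto
    then show ?thesis by simp
  qed
  have cNW: "card {j \<in> {1..1::nat}. d 1 j = NW} = (if d 1 1 = NW then 1 else 0)"
  proof -
    have "{j \<in> {1..1::nat}. d 1 j = NW} = (if d 1 1 = NW then {1} else {})" by auto
    then show ?thesis by simp
  qed
  have X2: "int (card {p. 1 \<in> D p}) = int n + (if d 1 1 = NE then 1 else 0) - (if d 1 1 = NW then 1 else 0)"
    using X_eq unfolding cNE cNW by simp
  have ones: "card {p. 1 \<in> D p} \<le> durfee D" by (rule ones_le_durfee[OF Ddpp])
  define l where "l = durfee D"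
  have l_ge: "int n - 1 \<le> int l" using X2 ones l_def by (auto split: if_splits)
  then have l2: "2 \<le> durfee D" using assms l_def by simp
  have above: "2 * l + 1 \<le> card {(r, c) \<in> supp D. r < c}"
    using dpp_above_bound[OF Ddpp l2] l_def by simp
  show False
  proof (cases "d 1 1 = NE")
    case True
    then have "int n + 1 \<le> int l" using X2 ones l_def by simp
    moreover have "card {(i, j) \<in> tri_idx n. d i j = NE} \<le> 2 * n - 1"
      by (rule AMT_NE_bound(1)[OF tAMT n1])
    ultimately show False using above u_eq by linarith
  next
    case False
    have "card {(i, j) \<in> tri_idx n. d i j = NE} \<le> 2 * n - 2"
      by (rule AMT_NE_bound(2)[OF tAMT n1 False])
    then show False using above u_eq l_ge assms by linarith
  qed
qed

end
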